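(* Let $X \subset Y \subset \mathbb{R}^{n}$ be finite sets, with $X$ having at least $k+1$ points. Define $i_{\ast}: \operatorname{Br}_{k}(X) \to \operatorname{Br}_{k}(Y)$ by sending a branch point $(s,[x])$ of $\Gamma_k(X)$ to the maximal branch point of $\Gamma_{k}(Y)$ below $(s,[x])$, where $x$ is regarded as a vertex of $L_{s,k}(Y)$. Then $i_*$ is order-preserving, and for all branch points $a,b$ of $\Gamma_{k}(X)$, \[ i_{\ast}(a) \cup i_{\ast}(b) \leq i_{\ast}(a \cup b), \] where the join on the left is taken in $\Gamma_{k}(Y)$ and the join $a \cup b$ on the right in $\Gamma_{k}(X)$.
   Context: $\mathbb{R}^n$ has Euclidean metric $d$. For $s\ge 0$, $V_s(X)$ is the Vietoris–Rips complex (vertex set $X$, simplices nonempty subsets with pairwise distances $\le s$), and for an integer $k\ge 0$, $L_{s,k}(X)$ is the full subcomplex of $V_s(X)$ on the vertices $x$ having at least $k$ points $x'\ne x$ of $X$ with $d(x,x')\le s$; for $X \subset Y$, $L_{s,k}(X) \subset L_{s,k}(Y)$. $\Gamma_{k}(X)$ is the poset whose elements are pairs $(s,[x])$ with $s \in \mathbb{R}_{\geq 0}$ and $[x] \in \pi_{0}L_{s,k}(X)$, with $(s,[x]) \leq (t,[y])$ iff $s \leq t$ and the function $\pi_{0}L_{s,k}(X) \to \pi_{0}L_{t,k}(X)$ induced by inclusion sends $[x]$ to $[y]$. $\cup$ denotes least upper bound (join), which exists for any two elements. An element $(t,[x])$ is a branch point if either (1) there is $s_{0} < t$ such that for all $s$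 with $s_{0} \leq s < t$ there are two distinct elements $(s,[x_{0}]) \neq (s,[x_{1}])$ both $\leq (t,[x])$; or (2) there is no element $(s,[y])$ with $s<t$ and $(s,[y]) \leq (t,[x])$. $\operatorname{Br}_{k}(X)$ is the poset of branch points. Every element $p$ has a unique maximal branch point below it: a branch point $b \le p$ with $b' \le b$ for all branch points $b' \le p$. *)

theory Defs
  imports "HOL-Analysis.Analysis"
begin


definition VR :: "(real ^ ('n::finite)) set \<Rightarrow> real \<Rightarrow> (real ^ ('n::finite)) set set" where
  "VR X s = {\<sigma>. \<sigma> \<subseteq> X \<and> \<sigma> \<noteq> {} \<and> finite \<sigma> \<and> (\<forall>x\<in>\<sigma>. \<forall>y\<in>\<sigma>. dist x y \<le> s)}"

definition Lverts :: "(real ^ ('n::finite)) set \<Rightarrow> nat \<Rightarrow> real \<Rightarrow> (real ^ ('n::finite)) set" where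
  "Lverts X k s = {x\<in>X. k \<le> card {x'\<in>X. x' \<noteq> x \<and> dist x x' \<le> s}}"

definition L :: "(real ^ ('n::finite)) set \<Rightarrow> nat \<Rightarrow> real \<Rightarrow> (real ^ ('n::finite)) set set" where
  "L X k s = {\<sigma>\<in>VR X s. \<sigma> \<subseteq> Lverts X k s}"

definition scomp :: "'a set set \<Rightarrow> 'a \<Rightarrow> 'a set" where
  "scomp K x = {y. (\<lambda>u v. {u, v} \<in> K)\<^sup>*\<^sup>* x y}"

definition pi0 :: "'a set set \<Rightarrow> 'a set set" where
  "pi0 K = scomp K ` (\<Union>K)"

definition Gamma :: "(real ^ ('n::finite)) set \<Rightarrow> nat \<Rightarrow> (real \<times> (real ^ ('n::finite)) set) set" where
  "Gamma X k = {(s, C). 0 \<le> s \<and> C \<in> pi0 (L X k s)}"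

text \<open>(s,C) \<le> (t,D) iff s \<le> t and the map induced by inclusion L_s \<subseteq> L_t
sends C to D.\<close>
definition gle :: "(real ^ ('n::finite)) set \<Rightarrow> nat \<Rightarrow> real \<times> (real ^ ('n::finite)) set \<Rightarrow> real \<times> (real ^ ('n::finite)) set \<Rightarrow> bool" where
  "gle X k p q \<longleftrightarrow> p \<in> Gamma X k \<and> q \<in> Gamma X k \<and> fst p \<le> fst q \<and>
     (\<forall>x\<in>snd p. scomp (L X k (fst q)) x = snd q)"

definition is_lub :: "(real ^ ('n::finite)) set \<Rightarrow> nat \<Rightarrow> real \<times> (real ^ ('n::finite)) set \<Rightarrow> real \<times> (real ^ ('n::finite)) set
     \<Rightarrow> real \<times> (real ^ ('n::finite)) set \<Rightarrow> bool" where
  "is_lub X k a b c \<longleftrightarrow> gle X k a c \<and> gle X k b c \<and>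
     (\<forall>d. gle X k a d \<longrightarrow> gle X k b d \<longrightarrow> gle X k c d)"

definition join :: "(real ^ ('n::finite)) set \<Rightarrow> nat \<Rightarrow> real \<times> (real ^ ('n::finite)) set \<Rightarrow> real \<times> (real ^ ('n::finite)) set
     \<Rightarrow> real \<times> (real ^ ('n::finite)) set" where
  "join X k a b = (THE c. is_lub X k a b c)"

definition is_branch :: "(real ^ ('n::finite)) set \<Rightarrow> nat \<Rightarrow> real \<times> (real ^ ('n::finite)) set \<Rightarrow> bool" where
  "is_branch X k p \<longleftrightarrow> p \<in> Gamma X k \<and>
     ((\<exists>s0 < fst p. \<forall>s. s0 \<le> s \<and> s < fst p \<longrightarrow>
          (\<exists>C0 C1. C0 \<noteq> C1 \<and> gle X k (s, C0) p \<and> gle X k (s, C1) p))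
      \<or> \<not> (\<exists>q. fst q < fst p \<and> gle X k q p))"

definition Br :: "(real ^ ('n::finite)) set \<Rightarrow> nat \<Rightarrow> (real \<times> (real ^ ('n::finite)) set) set" where
  "Br X k = {p. is_branch X k p}"

definition maxbr :: "(real ^ ('n::finite)) set \<Rightarrow> nat \<Rightarrow> real \<times> (real ^ ('n::finite)) set \<Rightarrow> real \<times> (real ^ ('n::finite)) set" where
  "maxbr X k p = (THE b. is_branch X k b \<and> gle X k b p \<and>
      (\<forall>b'. is_branch X k b' \<and> gle X k b' p \<longrightarrow> gle X k b' b))"

text \<open>i_*: send (s,[x]) to the maximal branch point of Gamma_k(Y) below (s,[x]_Y).
The representative x of the class is chosen arbitrarily (the result does not
depend on the choice).\<close>
definition istar :: "(real ^ ('n::finite)) set \<Rightarrow> nat \<Rightarrow> real \<times> (real ^ ('n::finite)) set \<Rightarrow> real \<times> (real ^ ('n::finite)) set" where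
  "istar Y k p = maxbr Y k (fst p, scomp (L Y k (fst p)) (SOME x. x \<in> snd p))"

end

theory Submission
  imports Defs
begin

lemma rt_sym:
  assumes "(\<lambda>u v. {u, v} \<in> K)\<^sup>*\<^sup>* x y" shows "(\<lambda>u v. {u, v} \<in> K)\<^sup>*\<^sup>* y x"
  using assms
proof induction
  case base then show ?case by simp
next
  case (step y z)
  have "{z, y} \<in> K" using step(2) by (simp add: insert_commute)
  then show ?case using step(3) by (rule converse_rtranclp_into_rtranclp)
qed

lemma scomp_eq: assumes "y \<in> scomp K x" shows "scomp K y = scomp K x"
proof -
  have xy: "(\<lambda>u v. {u, v} \<in> K)\<^sup>*\<^sup>* x y" using assms by (simp add: scomp_def)
  have yx: "(\<lambda>u v. {u, v} \<in> K)\<^sup>*\<^sup>* y x" using rt_sym[OF xy] .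
  show ?thesis
  proof (intro set_eqI iffI)
    fix z assume "z \<in> scomp K y"
    then have "(\<lambda>u v. {u, v} \<in> K)\<^sup>*\<^sup>* y z" by (simp add: scomp_def)
    with xy have "(\<lambda>u v. {u, v} \<in> K)\<^sup>*\<^sup>* x z" by (rule rtranclp_trans)
    then show "z \<in> scomp K x" by (simp add: scomp_def)
  next
    fix z assume "z \<in> scomp K x"
    then have "(\<lambda>u v. {u, v} \<in> K)\<^sup>*\<^sup>* x z" by (simp add: scomp_def)
    with yx have "(\<lambda>u v. {u, v} \<in> K)\<^sup>*\<^sup>* y z" by (rule rtranclp_trans)
    then show "z \<in> scomp K y" by (simp add: scomp_def)
  qed
qed

lemma self_in_scomp: "x \<in> scomp K x" by (simp add: scomp_def)

lemma scomp_mono: assumes "K \<subseteq> K'" "y \<in> scomp K x" shows "y \<in> scomp K' x"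
proof -
  have le: "(\<lambda>u v. {u, v} \<in> K) \<le> (\<lambda>u v. {u, v} \<in> K')" using assms(1) by (auto simp: le_fun_def)
  have "(\<lambda>u v. {u, v} \<in> K)\<^sup>*\<^sup>* x y" using assms(2) by (simp add: scomp_def)
  then have "(\<lambda>u v. {u, v} \<in> K')\<^sup>*\<^sup>* x y" using rtranclp_mono[OF le] by (simp add: le_fun_def)
  then show ?thesis by (simp add: scomp_def)
qed

lemma scomp_Union: assumes "x \<in> \<Union>K" "y \<in> scomp K x" shows "y \<in> \<Union>K"
proof -
  have "(\<lambda>u v. {u, v} \<in> K)\<^sup>*\<^sup>* x y" using assms(2) by (simp add: scomp_def)
  then show ?thesis
  proof (induction rule: rtranclp_induct)
    case base then show ?case using assms(1) .
  next
    case (step y z)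
    then have "{y, z} \<in> K" by simp
    then show ?case by blast
  qed
qed

lemma pi0_E: assumes "C \<in> pi0 K" "x \<in> C" shows "scomp K x = C"
proof -
  obtain x0 where "C = scomp K x0" using assms(1) unfolding pi0_def by blast
  then show ?thesis using scomp_eq assms(2) by simp
qed

lemma pi0_ne: assumes "C \<in> pi0 K" shows "\<exists>x. x \<in> C"
proof -
  obtain x0 where c: "C = scomp K x0" using assms(1) unfolding pi0_def by blast
  have "x0 \<in> C" unfolding c by (rule self_in_scomp)
  then show ?thesis by blast
qed

lemma pi0_sub: assumes "C \<in> pi0 K" shows "C \<subseteq> \<Union>K"
proof -
  obtain x0 where x0: "x0 \<in> \<Union>K" and c: "C = scomp K x0" using assms(1) unfolding pi0_def by (rule imageE)
  show ?thesis unfolding c using scomp_Union[OF x0] by (rule subsetI)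
qed

lemma Lverts_mono: assumes "finite Z" "s \<le> s'" shows "Lverts Z k s \<subseteq> Lverts Z k s'"
proof
  fix x assume "x \<in> Lverts Z k s"
  then have x: "x \<in> Z" "k \<le> card {x'\<in>Z. x' \<noteq> x \<and> dist x x' \<le> s}" by (auto simp: Lverts_def)
  have "card {x'\<in>Z. x' \<noteq> x \<and> dist x x' \<le> s} \<le> card {x'\<in>Z. x' \<noteq> x \<and> dist x x' \<le> s'}"
    by (rule card_mono) (use assms in auto)
  then show "x \<in> Lverts Z k s'" using x by (auto simp: Lverts_def)
qed

lemma L_mono: assumes "finite Z" "s \<le> s'" shows "L Z k s \<subseteq> L Z k s'"
  using Lverts_mono[OF assms, of k] assms(2) unfolding L_def VR_def by force

lemma Lverts_sub: assumes "X \<subseteq> Y" "finite Y" shows "Lverts X k s \<subseteq> Lverts Y k s"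
proof
  fix x assume "x \<in> Lverts X k s"
  then have x: "x \<in> X" "k \<le> card {x'\<in>X. x' \<noteq> x \<and> dist x x' \<le> s}" by (auto simp: Lverts_def)
  have "card {x'\<in>X. x' \<noteq> x \<and> dist x x' \<le> s} \<le> card {x'\<in>Y. x' \<noteq> x \<and> dist x x' \<le> s}"
    by (rule card_mono) (use assms in auto)
  then show "x \<in> Lverts Y k s" using x assms by (auto simp: Lverts_def)
qed

lemma L_sub: assumes "X \<subseteq> Y" "finite Y" shows "L X k s \<subseteq> L Y k s"
  using Lverts_sub[OF assms, of k s] assms(1) unfolding L_def VR_def by force

lemma L_Union_sub: "\<Union>(L Z k s) \<subseteq> Z"
  unfolding L_def VR_def by auto

lemma L_eq:
  assumes "\<forall>x\<in>Z. \<forall>y\<in>Z. dist x y \<le> s \<longleftrightarrow> dist x y \<le> s'"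
  shows "L Z k s = L Z k s'"
proof -
  have V: "VR Z s = VR Z s'"
    unfolding VR_def using assms by (auto; meson subsetD)+
  have "\<And>x. x \<in> Z \<Longrightarrow> {x'\<in>Z. x' \<noteq> x \<and> dist x x' \<le> s} = {x'\<in>Z. x' \<noteq> x \<and> dist x x' \<le> s'}"
    using assms by auto
  then have "Lverts Z k s = Lverts Z k s'" unfolding Lverts_def by auto
  then show ?thesis using V unfolding L_def by simp
qed

lemma right_const:
  assumes "finite Z"
  shows "\<exists>e>0. \<forall>v. s \<le> v \<and> v < s + e \<longrightarrow> L Z k v = L Z k s"
proof -
  let ?D = "(\<lambda>(x,y). dist x y) ` (Z \<times> Z)"
  define A where "A = {d\<in>?D. d > s}"
  have finA: "finite A" using assms unfolding A_def by simp
  define e where "e = (if A = {} then 1 else Min A - s)"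
  have epos: "e > 0"
  proof (cases "A = {}")
    case False
    then have "Min A \<in> A" using finA by simp
    then show ?thesis using False unfolding e_def A_def by simp
  qed (simp add: e_def)
  show ?thesis
  proof (intro exI[of _ e] conjI allI impI epos)
    fix v assume v: "s \<le> v \<and> v < s + e"
    show "L Z k v = L Z k s"
    proof (rule L_eq, intro ballI)
      fix x y assume xy: "x \<in> Z" "y \<in> Z"
      have dD: "dist x y \<in> ?D" using xy by force
      show "dist x y \<le> v \<longleftrightarrow> dist x y \<le> s"
      proof
        assume a: "dist x y \<le> v"
        show "dist x y \<le> s"
        proof (rule ccontr)
          assume "\<not> dist x y \<le> s"
          then have dA: "dist x y \<in> A" using dD unfolding A_def by simp
          then have "A \<noteq> {}" by auto
          moreover have "Min A \<le> dist x y" using finA dA by simp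
          ultimately show False using v a unfolding e_def by simp
        qed
      qed (use v in simp)
    qed
  qed
qed

lemma left_const:
  assumes "finite Z" "0 < u"
  shows "\<exists>w. 0 \<le> w \<and> w < u \<and> (\<forall>v. w \<le> v \<and> v < u \<longrightarrow> L Z k v = L Z k w)"
proof -
  let ?D = "(\<lambda>(x,y). dist x y) ` (Z \<times> Z)"
  define B where "B = {d\<in>?D. d < u}"
  have finB: "finite B" using assms unfolding B_def by simp
  define w where "w = (if B = {} then 0 else max 0 (Max B))"
  have w0: "0 \<le> w" unfolding w_def by simp
  have wu: "w < u"
  proof (cases "B = {}")
    case False
    then have "Max B \<in> B" using finB by simp
    then show ?thesis using False assms unfolding w_def B_def by simp
  qed (use assms in \<open>simp add: w_def\<close>)
  show ?thesis
  proof (intro exI[of _ w] conjI allI impI w0 wu)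
    fix v assume v: "w \<le> v \<and> v < u"
    show "L Z k v = L Z k w"
    proof (rule L_eq, intro ballI)
      fix x y assume xy: "x \<in> Z" "y \<in> Z"
      have dD: "dist x y \<in> ?D" using xy by force
      show "dist x y \<le> v \<longleftrightarrow> dist x y \<le> w"
      proof
        assume a: "dist x y \<le> v"
        then have dB: "dist x y \<in> B" using dD v unfolding B_def by simp
        then have "B \<noteq> {}" by auto
        moreover have "dist x y \<le> Max B" using finB dB by simp
        ultimately show "dist x y \<le> w" unfolding w_def by simp
      qed (use v in simp)
    qed
  qed
qed

lemma all_conn:
  assumes "finite Z" "k + 1 \<le> card Z" "\<forall>x\<in>Z. \<forall>y\<in>Z. dist x y \<le> s" "x \<in> Z" "y \<in> Z"
  shows "y \<in> scomp (L Z k s) x"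
proof -
  have lv: "z \<in> Lverts Z k s" if "z \<in> Z" for z
  proof -
    have "{x'\<in>Z. x' \<noteq> z \<and> dist z x' \<le> s} = Z - {z}" using assms(3) that by auto
    moreover have "card (Z - {z}) = card Z - 1" using assms(1) that by simp
    ultimately show ?thesis using that assms(2) unfolding Lverts_def by simp
  qed
  have s0: "0 \<le> s" using assms(3,4) by (metis dist_self)
  have "{x, y} \<in> L Z k s"
    unfolding L_def VR_def using assms lv s0 by auto
  then show ?thesis unfolding scomp_def by auto
qed

lemma gle_Gamma: "gle Z k p q \<Longrightarrow> p \<in> Gamma Z k \<and> q \<in> Gamma Z k"
  by (simp add: gle_def)

lemma Gamma_D: "(s, C) \<in> Gamma Z k \<Longrightarrow> 0 \<le> s \<and> C \<in> pi0 (L Z k s)"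
  by (simp add: Gamma_def)

lemma gle_refl: assumes "p \<in> Gamma Z k" shows "gle Z k p p"
proof -
  have "snd p \<in> pi0 (L Z k (fst p))" using assms unfolding Gamma_def by auto
  then have "\<forall>x\<in>snd p. scomp (L Z k (fst p)) x = snd p" by (intro ballI pi0_E)
  then show ?thesis using assms unfolding gle_def by simp
qed

lemma gle_trans: assumes pq: "gle Z k p q" and qr: "gle Z k q r" shows "gle Z k p r"
proof -
  have "scomp (L Z k (fst r)) x = snd r" if "x \<in> snd p" for x
  proof -
    have "scomp (L Z k (fst q)) x = snd q" using pq that unfolding gle_def by simp
    then have "x \<in> snd q" using self_in_scomp[of x "L Z k (fst q)"] by simp
    then show ?thesis using qr unfolding gle_def by simp
  qed
  moreover have "fst p \<le> fst r" using pq qr unfolding gle_def by simp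
  ultimately show ?thesis using pq qr unfolding gle_def by simp
qed

lemma gle_antisym: assumes "gle Z k p q" "gle Z k q p" shows "p = q"
proof -
  have f: "fst p = fst q" using assms unfolding gle_def by simp
  have P: "snd p \<in> pi0 (L Z k (fst p))" using assms unfolding gle_def Gamma_def by auto
  obtain x where x: "x \<in> snd p" using pi0_ne[OF P] by blast
  have h1: "scomp (L Z k (fst q)) x = snd q" using assms x unfolding gle_def by simp
  have h2: "scomp (L Z k (fst p)) x = snd p" using pi0_E[OF P x] .
  have "snd p = snd q" using h1 h2 unfolding f by simp
  then show ?thesis using f by (simp add: prod_eq_iff)
qed

lemma push:
  assumes "finite Z" "(s, C) \<in> Gamma Z k" "s \<le> s'" "x \<in> C"
  shows "gle Z k (s, C) (s', scomp (L Z k s') x)"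
proof -
  have C: "0 \<le> s" "C \<in> pi0 (L Z k s)" using Gamma_D[OF assms(2)] by auto
  have "x \<in> \<Union>(L Z k s)" using pi0_sub[OF C(2)] assms(4) by auto
  then have "x \<in> \<Union>(L Z k s')" using L_mono[OF assms(1,3), of k] by auto
  then have G: "(s', scomp (L Z k s') x) \<in> Gamma Z k"
    using C assms(3) unfolding Gamma_def pi0_def by auto
  have "scomp (L Z k s') y = scomp (L Z k s') x" if "y \<in> C" for y
  proof -
    have "y \<in> scomp (L Z k s) x" using pi0_E[OF C(2) assms(4)] that by simp
    then have "y \<in> scomp (L Z k s') x" by (rule scomp_mono[OF L_mono[OF assms(1,3)]])
    then show ?thesis by (rule scomp_eq)
  qed
  then show ?thesis using G assms(2,3) unfolding gle_def by simp
qed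

lemma push_le:
  assumes "finite Z" "gle Z k (s, C) (t, D)" "s \<le> u" "u \<le> t" "x \<in> C"
  shows "gle Z k (u, scomp (L Z k u) x) (t, D)"
proof -
  have sG: "(s, C) \<in> Gamma Z k" using gle_Gamma[OF assms(2)] by simp
  have G1: "(u, scomp (L Z k u) x) \<in> Gamma Z k"
    using gle_Gamma[OF push[OF assms(1) sG assms(3,5)]] by simp
  have G2: "(t, D) \<in> Gamma Z k" using gle_Gamma[OF assms(2)] by blast
  have Dx: "scomp (L Z k t) x = D" using assms(2,5) unfolding gle_def by simp
  have "scomp (L Z k t) y = D" if "y \<in> scomp (L Z k u) x" for y
  proof -
    have "y \<in> scomp (L Z k t) x" by (rule scomp_mono[OF L_mono[OF assms(1,4)] that])
    then have "scomp (L Z k t) y = scomp (L Z k t) x" by (rule scomp_eq)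
    then show ?thesis using Dx by simp
  qed
  then show ?thesis using G1 G2 assms(4) unfolding gle_def by simp
qed

lemma gle_level:
  assumes "L Z k u = L Z k v" "0 \<le> u" "0 \<le> v" "u \<le> t" "v \<le> t"
  shows "gle Z k (u, C) (t, D) \<longleftrightarrow> gle Z k (v, C) (t, D)"
  using assms by (simp add: gle_def Gamma_def)

lemma join_ex:
  assumes Z: "finite Z" and cZ: "k + 1 \<le> card Z" and aG: "a \<in> Gamma Z k" and bG: "b \<in> Gamma Z k"
  shows "\<exists>c. is_lub Z k a b c"
proof -
  obtain s C where a: "a = (s, C)" by (cases a)
  obtain t D where b: "b = (t, D)" by (cases b)
  have Ca: "0 \<le> s" "C \<in> pi0 (L Z k s)" using aG a Gamma_D by auto
  have Db: "0 \<le> t" "D \<in> pi0 (L Z k t)" using bG b Gamma_D by auto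
  obtain x where x: "x \<in> C" using pi0_ne[OF Ca(2)] by blast
  obtain y where y: "y \<in> D" using pi0_ne[OF Db(2)] by blast
  have xZ: "x \<in> Z" using subsetD[OF L_Union_sub subsetD[OF pi0_sub[OF Ca(2)] x]] .
  have yZ: "y \<in> Z" using subsetD[OF L_Union_sub subsetD[OF pi0_sub[OF Db(2)] y]] .
  define m where "m = max s t"
  let ?D = "(\<lambda>(x,y). dist x y) ` (Z \<times> Z)"
  define M where "M = Max ?D"
  have bigM: "\<forall>x\<in>Z. \<forall>y\<in>Z. dist x y \<le> max m M"
  proof (intro ballI)
    fix x' y' assume "x' \<in> Z" "y' \<in> Z"
    then have "dist x' y' \<in> ?D" by force
    then have "dist x' y' \<le> M" unfolding M_def using Z by simp
    then show "dist x' y' \<le> max m M" by simp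
  qed
  define V where "V = {v. m \<le> v \<and> y \<in> scomp (L Z k v) x}"
  have mM: "max m M \<in> V" unfolding V_def using all_conn[OF Z cZ bigM xZ yZ] by simp
  have Vne: "V \<noteq> {}" using mM by auto
  have bdd: "bdd_below V" unfolding V_def bdd_below_def by auto
  define v0 where "v0 = Inf V"
  have mv0: "m \<le> v0" unfolding v0_def by (rule cInf_greatest[OF Vne]) (auto simp: V_def)
  obtain e where e: "e > 0" "\<forall>v. v0 \<le> v \<and> v < v0 + e \<longrightarrow> L Z k v = L Z k v0"
    using right_const[OF Z] by blast
  obtain v where v: "v \<in> V" "v < v0 + e"
    using cInf_lessD[OF Vne, of "v0 + e"] e(1) unfolding v0_def by auto
  have "v0 \<le> v" unfolding v0_def using cInf_lower[OF v(1) bdd] .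
  then have "L Z k v = L Z k v0" using e v by blast
  then have yv0: "y \<in> scomp (L Z k v0) x" using v(1) unfolding V_def by auto
  define c where "c = (v0, scomp (L Z k v0) x)"
  have sv0: "s \<le> v0" "t \<le> v0" using mv0 unfolding m_def by auto
  have ac: "gle Z k a c" unfolding c_def a using push[OF Z aG[unfolded a] sv0(1) x] .
  have bc: "gle Z k b c"
    using push[OF Z bG[unfolded b] sv0(2) y] scomp_eq[OF yv0] unfolding c_def b by simp
  have least: "gle Z k c d" if ad: "gle Z k a d" and bd: "gle Z k b d" for d
  proof -
    obtain w E where d: "d = (w, E)" by (cases d)
    have sw: "s \<le> w" "t \<le> w" using ad bd a b d unfolding gle_def by auto
    have xE: "scomp (L Z k w) x = E" using ad a d x unfolding gle_def by auto
    have yE: "scomp (L Z k w) y = E" using bd b d y unfolding gle_def by auto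
    have "y \<in> scomp (L Z k w) x" using xE yE self_in_scomp[of y "L Z k w"] by simp
    then have "w \<in> V" unfolding V_def m_def using sw by simp
    then have v0w: "v0 \<le> w" unfolding v0_def by (rule cInf_lower[OF _ bdd])
    have "scomp (L Z k w) z = E" if "z \<in> scomp (L Z k v0) x" for z
    proof -
      have "z \<in> scomp (L Z k w) x" by (rule scomp_mono[OF L_mono[OF Z v0w] that])
      then have "scomp (L Z k w) z = scomp (L Z k w) x" by (rule scomp_eq)
      then show ?thesis using xE by simp
    qed
    then show ?thesis using gle_Gamma[OF ac] gle_Gamma[OF ad] v0w unfolding gle_def c_def d by simp
  qed
  show ?thesis unfolding is_lub_def using ac bc least by blast
qed

lemma join_lub:
  assumes "finite Z" "k + 1 \<le> card Z" "a \<in> Gamma Z k" "b \<in> Gamma Z k"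
  shows "is_lub Z k a b (join Z k a b)"
proof -
  obtain c where c: "is_lub Z k a b c" using join_ex[OF assms] by (elim exE)
  have "join Z k a b = c" unfolding join_def
  proof (rule the_equality)
    show "is_lub Z k a b c" using c .
  next
    fix c' assume c': "is_lub Z k a b c'"
    have 1: "gle Z k c' c"
      using mp[OF mp[OF spec[OF conjunct2[OF conjunct2[OF c'[unfolded is_lub_def]]], of c]]]
        c[unfolded is_lub_def] by simp
    have 2: "gle Z k c c'"
      using mp[OF mp[OF spec[OF conjunct2[OF conjunct2[OF c[unfolded is_lub_def]]], of c']]]
        c'[unfolded is_lub_def] by simp
    show "c' = c" using gle_antisym[OF 1 2] .
  qed
  then show ?thesis using c by simp
qed

lemma maxbr_ex:
  assumes Z: "finite Z" and pG: "p \<in> Gamma Z k"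
  shows "\<exists>b. is_branch Z k b \<and> gle Z k b p \<and> (\<forall>b'. is_branch Z k b' \<and> gle Z k b' p \<longrightarrow> gle Z k b' b)"
proof -
  obtain t D where p: "p = (t, D)" by (cases p)
  have t0: "0 \<le> t" using Gamma_D[of t D Z k] pG p by simp
  define ok where "ok s \<longleftrightarrow> (\<exists>!C. gle Z k (s, C) p)" for s
  define U where "U = {s. 0 \<le> s \<and> s \<le> t \<and> (\<forall>s'. s \<le> s' \<and> s' \<le> t \<longrightarrow> ok s')}"
  have okt: "ok t" unfolding ok_def
  proof (rule ex1I[of _ D])
    show "gle Z k (t, D) p" using gle_refl[OF pG] p by simp
  next
    fix C assume C: "gle Z k (t, C) p"
    then have CP: "C \<in> pi0 (L Z k t)" using gle_Gamma[OF C] Gamma_D[of t C Z k] by simp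
    obtain x where x: "x \<in> C" using pi0_ne[OF CP] by (elim exE)
    have "scomp (L Z k t) x = D" using C x p unfolding gle_def by simp
    moreover have "scomp (L Z k t) x = C" using pi0_E[OF CP x] .
    ultimately show "C = D" by simp
  qed
  have tU: "t \<in> U" unfolding U_def using t0 okt by force
  have Une: "U \<noteq> {}" using tU by auto
  have bdd: "bdd_below U" unfolding U_def bdd_below_def by auto
  define u where "u = Inf U"
  have u0: "0 \<le> u" unfolding u_def by (rule cInf_greatest[OF Une]) (simp add: U_def)
  have ut: "u \<le> t" unfolding u_def by (rule cInf_lower[OF tU bdd])
  have okgt: "ok s'" if h: "u < s'" "s' \<le> t" for s'
  proof -
    obtain v where v: "v \<in> U" "v < s'" using cInf_lessD[OF Une, of s'] h unfolding u_def by auto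
    then show ?thesis using h unfolding U_def by auto
  qed
  have levelU: "\<And>C. gle Z k (v, C) p \<longleftrightarrow> gle Z k (v', C) p"
    if "L Z k v = L Z k v'" "0 \<le> v" "0 \<le> v'" "v \<le> t" "v' \<le> t" for v v'
    using gle_level[OF that] p by simp
  have oku: "ok u"
  proof -
    obtain e where e: "e > 0" "\<forall>v. u \<le> v \<and> v < u + e \<longrightarrow> L Z k v = L Z k u"
      using right_const[OF Z] by blast
    obtain v where v: "v \<in> U" "v < u + e"
      using cInf_lessD[OF Une, of "u + e"] e(1) unfolding u_def by auto
    have uv: "u \<le> v" unfolding u_def by (rule cInf_lower[OF v(1) bdd])
    have Luv: "L Z k v = L Z k u" using mp[OF spec[OF e(2), of v]] uv v(2) by simp
    have vt: "v \<le> t" and okv: "ok v" using v(1) unfolding U_def by auto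
    have eq: "\<And>C. gle Z k (v, C) p \<longleftrightarrow> gle Z k (u, C) p"
      using levelU[OF Luv] u0 uv vt ut by simp
    show ?thesis using okv unfolding ok_def eq .
  qed
  have uU: "u \<in> U"
  proof -
    have "ok s'" if "u \<le> s'" "s' \<le> t" for s'
    proof (cases "s' = u")
      case True then show ?thesis using oku by simp
    next
      case False then show ?thesis using okgt that by simp
    qed
    then show ?thesis unfolding U_def using u0 ut by auto
  qed
  have okU: "ok s'" if "u \<le> s'" "s' \<le> t" for s'
    using uU that unfolding U_def by auto
  obtain Cu where Cu: "gle Z k (u, Cu) p" and Cu_uniq: "\<And>C. gle Z k (u, C) p \<Longrightarrow> C = Cu"
    using oku unfolding ok_def by auto
  define b where "b = (u, Cu)"
  have bG: "b \<in> Gamma Z k" using gle_Gamma[OF Cu] b_def by simp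
  have below: "gle Z k (s, C) b" if su: "s \<le> u" and sC: "gle Z k (s, C) p" for s C
  proof -
    have CG: "(s, C) \<in> Gamma Z k" using gle_Gamma[OF sC] by simp
    then have CP: "C \<in> pi0 (L Z k s)" using Gamma_D[OF CG] by simp
    obtain x where x: "x \<in> C" using pi0_ne[OF CP] by (elim exE)
    have 1: "gle Z k (s, C) (u, scomp (L Z k u) x)" using push[OF Z CG su x] .
    have "gle Z k (u, scomp (L Z k u) x) p" using push_le[OF Z sC[unfolded p] su ut x] p by simp
    then have "scomp (L Z k u) x = Cu" by (rule Cu_uniq)
    then show ?thesis using 1 b_def by simp
  qed
  have branch: "is_branch Z k b"
  proof (cases "\<exists>q. fst q < fst b \<and> gle Z k q b")
    case False
    then show ?thesis unfolding is_branch_def using bG by simp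
  next
    case True
    then obtain q where q: "fst q < u" "gle Z k q b" unfolding b_def by auto
    obtain s C where qsc: "q = (s, C)" by (cases q)
    have qG: "(s, C) \<in> Gamma Z k" using gle_Gamma[OF q(2)] qsc by simp
    have s0: "0 \<le> s" using Gamma_D[OF qG] by simp
    have su: "s < u" using q(1) qsc by simp
    have qp: "gle Z k (s, C) p" using gle_trans[OF q(2)[unfolded qsc] Cu[folded b_def]] .
    have upos: "0 < u" using s0 su by simp
    obtain w where w: "0 \<le> w" "w < u" "\<forall>v. w \<le> v \<and> v < u \<longrightarrow> L Z k v = L Z k w"
      using left_const[OF Z upos] by blast
    have wU: "w \<notin> U"
    proof
      assume "w \<in> U"
      then have "u \<le> w" unfolding u_def by (rule cInf_lower[OF _ bdd])
      then show False using w(2) by simp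
    qed
    then obtain s'' where s'': "w \<le> s''" "s'' \<le> t" "\<not> ok s''"
      unfolding U_def using w(1,2) ut by auto
    have s''u: "s'' < u"
    proof (rule ccontr)
      assume "\<not> s'' < u"
      then have "ok s''" using okU s''(2) by simp
      then show False using s''(3) by simp
    qed
    have cond1: "\<forall>s'. max w s \<le> s' \<and> s' < fst b \<longrightarrow>
          (\<exists>C0 C1. C0 \<noteq> C1 \<and> gle Z k (s', C0) b \<and> gle Z k (s', C1) b)"
    proof (intro allI impI)
      fix s' assume s': "max w s \<le> s' \<and> s' < fst b"
      have s'u: "s' < u" and ws': "w \<le> s'" and ss': "s \<le> s'" using s' b_def by auto
      have L1a: "L Z k s' = L Z k w" using mp[OF spec[OF w(3), of s']] s'u ws' by simp
      have L1b: "L Z k s'' = L Z k w" using mp[OF spec[OF w(3), of s'']] s''u s''(1) by simp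
      have L1: "L Z k s' = L Z k s''" using L1a L1b by simp
      have eqs: "\<And>C. gle Z k (s', C) p \<longleftrightarrow> gle Z k (s'', C) p"
        using levelU[OF L1] w(1) ws' s''(1) s'u s''(2) ut by simp
      have nok: "\<not> ok s'" using s''(3) unfolding ok_def eqs .
      have CP: "C \<in> pi0 (L Z k s)" using Gamma_D[OF qG] by simp
      obtain x where x: "x \<in> C" using pi0_ne[OF CP] by (elim exE)
      have e0: "gle Z k (s', scomp (L Z k s') x) p"
        using push_le[OF Z qp[unfolded p] ss' _ x] s'u ut p by simp
      then obtain C1 where C1: "gle Z k (s', C1) p" "C1 \<noteq> scomp (L Z k s') x"
        using nok unfolding ok_def by auto
      show "\<exists>C0 C1. C0 \<noteq> C1 \<and> gle Z k (s', C0) b \<and> gle Z k (s', C1) b"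
        using below[OF _ e0] below[OF _ C1(1)] C1(2) s'u by auto
    qed
    have "max w s < fst b" using w(2) su b_def by simp
    then show ?thesis unfolding is_branch_def using bG cond1 by blast
  qed
  have maxim: "gle Z k b' b" if br: "is_branch Z k b'" and le: "gle Z k b' p" for b'
  proof -
    obtain s C where b': "b' = (s, C)" by (cases b')
    show ?thesis
    proof (cases "s \<le> u")
      case True then show ?thesis using below le b' by simp
    next
      case False
      then have us: "u < s" by simp
      have st: "s \<le> t" using le b' p unfolding gle_def by simp
      have sp: "gle Z k (s, C) p" using le b' by simp
      have b'G: "(s, C) \<in> Gamma Z k" using gle_Gamma[OF sp] by simp
      have bb': "gle Z k b (s, C)"
      proof -
        have CuP: "Cu \<in> pi0 (L Z k u)" using Gamma_D[OF bG[unfolded b_def]] by simp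
        obtain x where x: "x \<in> Cu" using pi0_ne[OF CuP] by (elim exE)
        have 1: "gle Z k b (s, scomp (L Z k s) x)" using push[OF Z bG[unfolded b_def] _ x] us b_def by simp
        have 2: "gle Z k (s, scomp (L Z k s) x) p" using push_le[OF Z Cu[unfolded p] _ st x] us p by simp
        have "ok s" using okU us st by simp
        then have "scomp (L Z k s) x = C" using 2 sp unfolding ok_def by auto
        then show ?thesis using 1 by simp
      qed
      have "False"
      proof -
        have "(\<exists>s0 < s. \<forall>s'. s0 \<le> s' \<and> s' < s \<longrightarrow>
                (\<exists>C0 C1. C0 \<noteq> C1 \<and> gle Z k (s', C0) (s, C) \<and> gle Z k (s', C1) (s, C)))
             \<or> \<not> (\<exists>q. fst q < s \<and> gle Z k q (s, C))"
          using br b' unfolding is_branch_def by simp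
        then show False
        proof
          assume "\<exists>s0 < s. \<forall>s'. s0 \<le> s' \<and> s' < s \<longrightarrow>
                (\<exists>C0 C1. C0 \<noteq> C1 \<and> gle Z k (s', C0) (s, C) \<and> gle Z k (s', C1) (s, C))"
          then obtain s0 where s0: "s0 < s" and h: "\<forall>s'. s0 \<le> s' \<and> s' < s \<longrightarrow>
                (\<exists>C0 C1. C0 \<noteq> C1 \<and> gle Z k (s', C0) (s, C) \<and> gle Z k (s', C1) (s, C))" by blast
          define s' where "s' = max s0 u"
          have "s0 \<le> s' \<and> s' < s" using s0 us unfolding s'_def by simp
          then obtain C0 C1 where c: "C0 \<noteq> C1" "gle Z k (s', C0) (s, C)" "gle Z k (s', C1) (s, C)"
            using h by blast
          have p0: "gle Z k (s', C0) p" using gle_trans[OF c(2) sp] .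
          have p1: "gle Z k (s', C1) p" using gle_trans[OF c(3) sp] .
          have "ok s'" using okU[of s'] us st s0 unfolding s'_def by simp
          then have "C0 = C1" using p0 p1 unfolding ok_def by auto
          then show False using c(1) by simp
        next
          assume "\<not> (\<exists>q. fst q < s \<and> gle Z k q (s, C))"
          then show False using bb' us b_def by auto
        qed
      qed
      then show ?thesis by simp
    qed
  qed
  show ?thesis using branch Cu maxim b_def p by auto
qed

lemma maxbr_props:
  assumes "finite Z" "p \<in> Gamma Z k"
  shows "is_branch Z k (maxbr Z k p) \<and> gle Z k (maxbr Z k p) p \<and>
         (\<forall>b'. is_branch Z k b' \<and> gle Z k b' p \<longrightarrow> gle Z k b' (maxbr Z k p))"
proof -
  obtain b where b: "is_branch Z k b \<and> gle Z k b p \<and> (\<forall>b'. is_branch Z k b' \<and> gle Z k b' p \<longrightarrow> gle Z k b' b)"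
    using maxbr_ex[OF assms] by (elim exE)
  have "maxbr Z k p = b" unfolding maxbr_def
  proof (rule the_equality)
    show "is_branch Z k b \<and> gle Z k b p \<and> (\<forall>b'. is_branch Z k b' \<and> gle Z k b' p \<longrightarrow> gle Z k b' b)" using b .
  next
    fix x assume x: "is_branch Z k x \<and> gle Z k x p \<and> (\<forall>b'. is_branch Z k b' \<and> gle Z k b' p \<longrightarrow> gle Z k b' x)"
    have 1: "gle Z k x b" using mp[OF spec[OF conjunct2[OF conjunct2[OF b]], of x]] x by simp
    have 2: "gle Z k b x" using mp[OF spec[OF conjunct2[OF conjunct2[OF x]], of b]] b by simp
    show "x = b" using gle_antisym[OF 1 2] .
  qed
  then show ?thesis using b by simp
qed

definition Iy :: "(real ^ ('n::finite)) set \<Rightarrow> nat \<Rightarrow> real \<times> (real ^ ('n::finite)) set \<Rightarrow> real \<times> (real ^ ('n::finite)) set" where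
  "Iy Y k p = (fst p, scomp (L Y k (fst p)) (SOME x. x \<in> snd p))"

lemma istar_Iy: "istar Y k p = maxbr Y k (Iy Y k p)"
  by (simp add: istar_def Iy_def)

lemma Iy_Gamma:
  assumes XY: "X \<subseteq> Y" and Y: "finite Y" and aG: "(s, C) \<in> Gamma X k"
  shows "Iy Y k (s, C) \<in> Gamma Y k" and "(SOME x. x \<in> C) \<in> C"
proof -
  have C: "0 \<le> s" "C \<in> pi0 (L X k s)" using Gamma_D[OF aG] by auto
  obtain x0 where "x0 \<in> C" using pi0_ne[OF C(2)] by (elim exE)
  then show xC: "(SOME x. x \<in> C) \<in> C" by (rule someI)
  have "(SOME x. x \<in> C) \<in> \<Union>(L X k s)" using subsetD[OF pi0_sub[OF C(2)] xC] .
  then have "(SOME x. x \<in> C) \<in> \<Union>(L Y k s)" using L_sub[OF XY Y, of k s] by auto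
  then show "Iy Y k (s, C) \<in> Gamma Y k" using C(1) unfolding Iy_def Gamma_def pi0_def by auto
qed

lemma Iy_mono:
  assumes XY: "X \<subseteq> Y" and Y: "finite Y" and ab: "gle X k a b"
  shows "gle Y k (Iy Y k a) (Iy Y k b)"
proof -
  obtain s C where a: "a = (s, C)" by (cases a)
  obtain t D where b: "b = (t, D)" by (cases b)
  have aG: "(s, C) \<in> Gamma X k" and bG: "(t, D) \<in> Gamma X k" using gle_Gamma[OF ab] a b by auto
  define x where "x = (SOME x. x \<in> C)"
  define y where "y = (SOME x. x \<in> D)"
  have xC: "x \<in> C" using Iy_Gamma(2)[OF XY Y aG] x_def by simp
  have yD: "y \<in> D" using Iy_Gamma(2)[OF XY Y bG] y_def by simp
  have st: "s \<le> t" using ab a b unfolding gle_def by simp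
  have XD: "scomp (L X k t) x = D" using ab a b xC unfolding gle_def by simp
  have "y \<in> scomp (L X k t) x" using yD XD by simp
  then have yx: "y \<in> scomp (L Y k t) x" by (rule scomp_mono[OF L_sub[OF XY Y]])
  have eqy: "scomp (L Y k t) y = scomp (L Y k t) x" using scomp_eq[OF yx] .
  have "scomp (L Y k t) z = scomp (L Y k t) y" if "z \<in> scomp (L Y k s) x" for z
  proof -
    have "z \<in> scomp (L Y k t) x" by (rule scomp_mono[OF L_mono[OF Y st] that])
    then have "scomp (L Y k t) z = scomp (L Y k t) x" by (rule scomp_eq)
    then show ?thesis using eqy by simp
  qed
  then show ?thesis
    using Iy_Gamma(1)[OF XY Y aG] Iy_Gamma(1)[OF XY Y bG] st
    unfolding gle_def Iy_def a b x_def y_def by simp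
qed

lemma istar_mono:
  assumes XY: "X \<subseteq> Y" and Y: "finite Y" and ab: "gle X k a b"
  shows "gle Y k (istar Y k a) (istar Y k b)"
proof -
  have I: "gle Y k (Iy Y k a) (Iy Y k b)" by (rule Iy_mono[OF XY Y ab])
  have G: "Iy Y k a \<in> Gamma Y k" "Iy Y k b \<in> Gamma Y k" using gle_Gamma[OF I] by auto
  note A = maxbr_props[OF Y G(1)]
  note B = maxbr_props[OF Y G(2)]
  have 1: "is_branch Y k (maxbr Y k (Iy Y k a))" using A by simp
  have 2: "gle Y k (maxbr Y k (Iy Y k a)) (Iy Y k b)" using gle_trans[OF conjunct1[OF conjunct2[OF A]] I] .
  have "gle Y k (maxbr Y k (Iy Y k a)) (maxbr Y k (Iy Y k b))"
    using mp[OF spec[OF conjunct2[OF conjunct2[OF B]], of "maxbr Y k (Iy Y k a)"]] 1 2 by simp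
  then show ?thesis by (simp add: istar_Iy)
qed

theorem mainTheorem15:
  fixes X Y :: "(real ^ ('n::finite)) set" and k :: nat
  assumes "X \<subseteq> Y" and "finite Y" and "k + 1 \<le> card X"
  shows "(\<forall>a\<in>Br X k. \<forall>b\<in>Br X k. gle X k a b \<longrightarrow> gle Y k (istar Y k a) (istar Y k b))
       \<and> (\<forall>a\<in>Br X k. \<forall>b\<in>Br X k.
            gle Y k (join Y k (istar Y k a) (istar Y k b)) (istar Y k (join X k a b)))"
proof
  show "\<forall>a\<in>Br X k. \<forall>b\<in>Br X k. gle X k a b \<longrightarrow> gle Y k (istar Y k a) (istar Y k b)"
    using istar_mono[OF assms(1,2)] by simp
next
  have X: "finite X" using assms(1,2) finite_subset by auto
  have cY: "k + 1 \<le> card Y" using card_mono[OF assms(2,1)] assms(3) by simp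
  show "\<forall>a\<in>Br X k. \<forall>b\<in>Br X k.
            gle Y k (join Y k (istar Y k a) (istar Y k b)) (istar Y k (join X k a b))"
  proof (intro ballI)
    fix a b assume a: "a \<in> Br X k" and b: "b \<in> Br X k"
    have aG: "a \<in> Gamma X k" using a unfolding Br_def is_branch_def by simp
    have bG: "b \<in> Gamma X k" using b unfolding Br_def is_branch_def by simp
    have J: "is_lub X k a b (join X k a b)" by (rule join_lub[OF X assms(3) aG bG])
    have ac: "gle X k a (join X k a b)" and bc: "gle X k b (join X k a b)" using J unfolding is_lub_def by auto
    have ia: "gle Y k (istar Y k a) (istar Y k (join X k a b))" by (rule istar_mono[OF assms(1,2) ac])
    have ib: "gle Y k (istar Y k b) (istar Y k (join X k a b))" by (rule istar_mono[OF assms(1,2) bc])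
    have G: "istar Y k a \<in> Gamma Y k" "istar Y k b \<in> Gamma Y k" using gle_Gamma[OF ia] gle_Gamma[OF ib] by auto
    have JY: "is_lub Y k (istar Y k a) (istar Y k b) (join Y k (istar Y k a) (istar Y k b))"
      by (rule join_lub[OF assms(2) cY G])
    show "gle Y k (join Y k (istar Y k a) (istar Y k b)) (istar Y k (join X k a b))"
      using mp[OF mp[OF spec[OF conjunct2[OF conjunct2[OF JY[unfolded is_lub_def]]], of "istar Y k (join X k a b)"] ia] ib] .
  qed
qed

end
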